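(* Let $M$ be a matroid on a finite set $E$ with $r(M)>0$ and let $B\in\mathcal{B}(M)$. Then $|F_M(B)|=r(M)$.
   Context: For a matroid $M$: $\mathcal{I}(M)$ its independent sets, $\mathcal{B}(M)$ its bases, $r(M)$ the size of a base, $r(X)$ the rank of $X\subseteq E$. $s(M)=\{A\in\mathcal{I}(M): |A|=r(M)-1\}$; $K_M(X)=\{a\in E: r(X\cup\{a\})=r(X)+1\}$; $F_M(B)=\{K_M(X): X\in s(M),\ X\subseteq B\}$ (a set of sets, so $|F_M(B)|$ counts distinct sets). *)

theory Defs
  imports Main
begin

definition matroid :: "'a set \<Rightarrow> 'a set set \<Rightarrow> bool" where
  "matroid E \<I> \<longleftrightarrow> finite E
     \<and> (\<forall>A\<in>\<I>. A \<subseteq> E)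
     \<and> {} \<in> \<I>
     \<and> (\<forall>A B. A \<in> \<I> \<and> B \<subseteq> A \<longrightarrow> B \<in> \<I>)
     \<and> (\<forall>A B. A \<in> \<I> \<and> B \<in> \<I> \<and> card A < card B \<longrightarrow> (\<exists>x\<in>B - A. insert x A \<in> \<I>))"

definition rk :: "'a set set \<Rightarrow> 'a set \<Rightarrow> nat" where
  "rk \<I> X = Max (card ` {A. A \<in> \<I> \<and> A \<subseteq> X})"

definition bases :: "'a set set \<Rightarrow> 'a set set" where
  "bases \<I> = {B. B \<in> \<I> \<and> (\<forall>A\<in>\<I>. B \<subseteq> A \<longrightarrow> A = B)}"

definition mrank :: "'a set \<Rightarrow> 'a set set \<Rightarrow> nat" where
  "mrank E \<I> = rk \<I> E"

definition s_sets :: "'a set \<Rightarrow> 'a set set \<Rightarrow> 'a set set" where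
  "s_sets E \<I> = {A. A \<in> \<I> \<and> card A = mrank E \<I> - 1}"

definition K_set :: "'a set \<Rightarrow> 'a set set \<Rightarrow> 'a set \<Rightarrow> 'a set" where
  "K_set E \<I> X = {a. a \<in> E \<and> rk \<I> (insert a X) = rk \<I> X + 1}"

definition F_fam :: "'a set \<Rightarrow> 'a set set \<Rightarrow> 'a set \<Rightarrow> 'a set set" where
  "F_fam E \<I> B = {K_set E \<I> X | X. X \<in> s_sets E \<I> \<and> X \<subseteq> B}"

end

theory Submission
  imports Defs
begin

lemma rk_indep:
  assumes m: "matroid E \<I>" and X: "X \<in> \<I>"
  shows "rk \<I> X = card X"
proof -
  have fE: "finite E" using m by (simp add: matroid_def)
  have sub: "\<forall>A\<in>\<I>. A \<subseteq> E" using m by (simp add: matroid_def)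
  have fX: "finite X" using X sub fE finite_subset by blast
  let ?S = "{A. A \<in> \<I> \<and> A \<subseteq> X}"
  have fin: "finite ?S" by (rule finite_subset[of _ "Pow X"]) (auto simp: fX)
  have "X \<in> ?S" using X by auto
  moreover have "\<forall>A\<in>?S. card A \<le> card X" using fX by (auto intro: card_mono)
  ultimately show ?thesis unfolding rk_def
    by (intro Max_eqI) (auto simp: fin)
qed

lemma base_card:
  assumes m: "matroid E \<I>" and B: "B \<in> bases \<I>"
  shows "card B = mrank E \<I>"
proof -
  have fE: "finite E" using m by (simp add: matroid_def)
  have sub: "\<forall>A\<in>\<I>. A \<subseteq> E" using m by (simp add: matroid_def)
  have aug: "\<forall>A B. A \<in> \<I> \<and> B \<in> \<I> \<and> card A < card B \<longrightarrow> (\<exists>x\<in>B - A. insert x A \<in> \<I>)"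
    using m by (simp add: matroid_def)
  have BI: "B \<in> \<I>" and mx: "\<forall>A\<in>\<I>. B \<subseteq> A \<longrightarrow> A = B" using B by (auto simp: bases_def)
  have BE: "B \<subseteq> E" using BI sub by auto
  let ?S = "{A. A \<in> \<I> \<and> A \<subseteq> E}"
  have fin: "finite ?S" by (rule finite_subset[of _ "Pow E"]) (auto simp: fE)
  have "B \<in> ?S" using BI BE by auto
  moreover have "\<forall>A\<in>?S. card A \<le> card B"
  proof
    fix A assume "A \<in> ?S"
    hence AI: "A \<in> \<I>" by auto
    show "card A \<le> card B"
    proof (rule ccontr)
      assume "\<not> card A \<le> card B"
      then obtain x where x: "x \<in> A - B" "insert x B \<in> \<I>" using aug AI BI by force
      hence "insert x B = B" using mx by blast
      thus False using x by auto
    qed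
  qed
  ultimately show ?thesis unfolding mrank_def rk_def
    by (intro Max_eqI[symmetric]) (auto simp: fin)
qed

theorem proposition2:
  fixes E :: "'a set" and \<I> :: "'a set set" and B :: "'a set"
  assumes "matroid E \<I>"
    and "mrank E \<I> > 0"
    and "B \<in> bases \<I>"
  shows "card (F_fam E \<I> B) = mrank E \<I>"
proof -
  note m = assms(1)
  have fE: "finite E" using m by (simp add: matroid_def)
  have sub: "\<forall>A\<in>\<I>. A \<subseteq> E" using m by (simp add: matroid_def)
  have down: "\<forall>A B. A \<in> \<I> \<and> B \<subseteq> A \<longrightarrow> B \<in> \<I>" using m by (simp add: matroid_def)
  have BI: "B \<in> \<I>" using assms(3) by (auto simp: bases_def)
  have BE: "B \<subseteq> E" using BI sub by auto
  have fB: "finite B" using BE fE finite_subset by blast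
  have cB: "card B = mrank E \<I>" using base_card[OF m assms(3)] .
  define r where "r = mrank E \<I>"
  have r0: "r > 0" using assms(2) r_def by simp
  define K where "K = (\<lambda>b. K_set E \<I> (B - {b}))"
  have Kin: "b \<in> K b" if "b \<in> B" for b
  proof -
    have I1: "B - {b} \<in> \<I>" using down BI by blast
    have "rk \<I> (B - {b}) = r - 1" using rk_indep[OF m I1] that fB cB r_def by simp
    moreover have "insert b (B - {b}) = B" using that by auto
    moreover have "rk \<I> B = r" using rk_indep[OF m BI] cB r_def by simp
    ultimately show ?thesis using that BE r0 unfolding K_def K_set_def by auto
  qed
  have Knot: "c \<notin> K b" if "c \<in> B" "c \<noteq> b" for b c
  proof -
    have "insert c (B - {b}) = B - {b}" using that by auto
    thus ?thesis unfolding K_def K_set_def by auto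
  qed
  have inj: "inj_on K B"
  proof (rule inj_onI)
    fix b c assume "b \<in> B" "c \<in> B" "K b = K c"
    thus "b = c" using Kin Knot by blast
  qed
  have F: "F_fam E \<I> B = K ` B"
  proof
    show "F_fam E \<I> B \<subseteq> K ` B"
    proof
      fix Y assume "Y \<in> F_fam E \<I> B"
      then obtain X where X: "Y = K_set E \<I> X" "X \<in> \<I>" "card X = r - 1" "X \<subseteq> B"
        unfolding F_fam_def s_sets_def r_def by auto
      have fX: "finite X" using X(4) fB finite_subset by blast
      have "card (B - X) = 1" using card_Diff_subset[OF fX X(4)] X(3) cB r_def r0 by simp
      then obtain b where b: "B - X = {b}" using card_1_singletonE by blast
      hence "X = B - {b}" using X(4) by blast
      moreover have "b \<in> B" using b by blast
      ultimately show "Y \<in> K ` B" using X(1) unfolding K_def by blast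
    qed
  next
    show "K ` B \<subseteq> F_fam E \<I> B"
    proof
      fix Y assume "Y \<in> K ` B"
      then obtain b where b: "b \<in> B" "Y = K b" by auto
      have "B - {b} \<in> \<I>" using down BI by blast
      moreover have "card (B - {b}) = r - 1" using b fB cB r_def by simp
      ultimately show "Y \<in> F_fam E \<I> B" using b unfolding F_fam_def s_sets_def K_def r_def
        by blast
    qed
  qed
  show ?thesis using F card_image[OF inj] cB by simp
qed

end
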